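(* Let $(\Omega,\mathcal F,\mathbb P)$ be an atomless probability space, let $X$ and $Y$ be continuously distributed integrable random variables on it, and let $p\in(0,1)$. Then: (i) If $X$ and $Y$ are weakly comonotonic with respect to $\mathcal P^X_p$, and $X$ and $Y$ are weakly antimonotonic with respect to $\mathcal Q^X_p$, then $(X,Y)$ maximizes the $\mathrm{VaR}_p$ aggregation, i.e. $\mathrm{VaR}_p(X+Y)=\max\{\mathrm{VaR}_p(X'+Y'): X'\overset{d}{=}X,\ Y'\overset{d}{=}Y\}$. (ii) $X$ and $Y$ are weakly comonotonic with respect to $\mathcal P^X_p$ if and only if $(X,Y)$ maximizes the $\mathrm{ES}_p$ aggregation, i.e. $\mathrm{ES}_p(X+Y)=\max\{\mathrm{ES}_p(X'+Y'): X'\overset{d}{=}X,\ Y'\overset{d}{=}Y\}$.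
   Context: In the maxima, $X',Y'$ range over random variables on $(\Omega,\mathcal F,\mathbb P)$ and $\overset{d}{=}$ denotes equality in distribution. For a random variable $Z$ and $q\in(0,1)$, $\mathrm{VaR}_q(Z)=\inf\{x\in\mathbb R:\mathbb P(Z\le x)>q\}$ and $\mathrm{ES}_q(Z)=\frac1{1-q}\int_q^1\mathrm{VaR}_r(Z)\,\mathrm dr$. Let $A^Z_p=\{\omega: Z(\omega)>\mathrm{VaR}_p(Z)\}$, $\mathcal P^Z_p=\{\delta_\omega\times\delta_{\omega'}:\omega\in A^Z_p,\ \omega'\in(A^Z_p)^c\}$ and $\mathcal Q^Z_p=\{\delta_\omega\times\delta_{\omega'}:\omega,\omega'\in A^Z_p\}$, where $\delta_\omega$ is the point mass at $\omega$. For a set $\mathcal P$ of product probability measures $\pi_1\times\pi_2$ on $(\Omega^2,\mathcal F\otimes\mathcal F)$, $X,Y$ are weakly comonotonic (resp. weakly antimonotonic) with respect to $\mathcal P$ if $\iint_{\Omega^2}(X(\omega)-X(\omega'))(Y(\omega)-Y(\omega'))\,\pi_1(\mathrm d\omega)\pi_2(\mathrm d\omega')\ge0$ (resp. $\le 0$) for every $\pi_1\times\pi_2\in\mathcal P$; for point masses $\delta_\omega\times\delta_{\omega'}$ the integral is $(X(\omega)-X(\omega'))(Y(\omega)-Y(\omega'))$. Random variables that are a.s. equal are identified, so such conditions are understood to hold for some representative versions of $X$ and $Y$. *)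

theory Defs
  imports "HOL-Probability.Probability"
begin

definition atomless :: "'a measure \<Rightarrow> bool" where
  "atomless M \<longleftrightarrow> (\<forall>A\<in>sets M. measure M A > 0 \<longrightarrow>
      (\<exists>B\<in>sets M. B \<subseteq> A \<and> 0 < measure M B \<and> measure M B < measure M A))"

definition continuously_distributed :: "'a measure \<Rightarrow> ('a \<Rightarrow> real) \<Rightarrow> bool" where
  "continuously_distributed M Z \<longleftrightarrow> (\<forall>x. measure M {w \<in> space M. Z w = x} = 0)"

definition VaR :: "'a measure \<Rightarrow> real \<Rightarrow> ('a \<Rightarrow> real) \<Rightarrow> real" where
  "VaR M q Z = Inf {x. measure M {w \<in> space M. Z w \<le> x} > q}"

definition ES :: "'a measure \<Rightarrow> real \<Rightarrow> ('a \<Rightarrow> real) \<Rightarrow> real" where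
  "ES M q Z = (LBINT r:{q<..<1}. VaR M r Z) / (1 - q)"

definition tail_set :: "'a measure \<Rightarrow> real \<Rightarrow> ('a \<Rightarrow> real) \<Rightarrow> 'a set" where
  "tail_set M p Z = {w \<in> space M. Z w > VaR M p Z}"

text \<open>Index pairs (w,w') of the point-mass product measures in P^Z_p and Q^Z_p.\<close>
definition P_pairs :: "'a measure \<Rightarrow> real \<Rightarrow> ('a \<Rightarrow> real) \<Rightarrow> ('a \<times> 'a) set" where
  "P_pairs M p Z = tail_set M p Z \<times> (space M - tail_set M p Z)"

definition Q_pairs :: "'a measure \<Rightarrow> real \<Rightarrow> ('a \<Rightarrow> real) \<Rightarrow> ('a \<times> 'a) set" where
  "Q_pairs M p Z = tail_set M p Z \<times> tail_set M p Z"

text \<open>Weak comonotonicity / antimonotonicity w.r.t. a set of point-mass products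
  delta_w x delta_w', (w,w') ranging over the given set of pairs.\<close>
definition wcomono_pts :: "('a \<times> 'a) set \<Rightarrow> ('a \<Rightarrow> real) \<Rightarrow> ('a \<Rightarrow> real) \<Rightarrow> bool" where
  "wcomono_pts S X Y \<longleftrightarrow> (\<forall>(w, w')\<in>S. (X w - X w') * (Y w - Y w') \<ge> 0)"

definition wantimono_pts :: "('a \<times> 'a) set \<Rightarrow> ('a \<Rightarrow> real) \<Rightarrow> ('a \<Rightarrow> real) \<Rightarrow> bool" where
  "wantimono_pts S X Y \<longleftrightarrow> (\<forall>(w, w')\<in>S. (X w - X w') * (Y w - Y w') \<le> 0)"

definition for_some_versions ::
  "'a measure \<Rightarrow> (('a \<Rightarrow> real) \<Rightarrow> ('a \<Rightarrow> real) \<Rightarrow> bool) \<Rightarrow> ('a \<Rightarrow> real) \<Rightarrow> ('a \<Rightarrow> real) \<Rightarrow> bool" where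
  "for_some_versions M R X Y \<longleftrightarrow> (\<exists>X0 Y0. X0 \<in> borel_measurable M \<and> Y0 \<in> borel_measurable M \<and>
      (AE w in M. X0 w = X w) \<and> (AE w in M. Y0 w = Y w) \<and> R X0 Y0)"

definition weakly_comonotonic_P :: "'a measure \<Rightarrow> real \<Rightarrow> ('a \<Rightarrow> real) \<Rightarrow> ('a \<Rightarrow> real) \<Rightarrow> bool" where
  "weakly_comonotonic_P M p X Y \<longleftrightarrow>
     for_some_versions M (\<lambda>X0 Y0. wcomono_pts (P_pairs M p X0) X0 Y0) X Y"

definition weakly_antimonotonic_Q :: "'a measure \<Rightarrow> real \<Rightarrow> ('a \<Rightarrow> real) \<Rightarrow> ('a \<Rightarrow> real) \<Rightarrow> bool" where
  "weakly_antimonotonic_Q M p X Y \<longleftrightarrow>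
     for_some_versions M (\<lambda>X0 Y0. wantimono_pts (Q_pairs M p X0) X0 Y0) X Y"

end

theory Submission
  imports Defs
begin

definition qf :: "real measure \<Rightarrow> real \<Rightarrow> real" where
  "qf N r = Inf {x. cdf N x > r}"

context real_distribution
begin

lemma qf_nonempty: assumes "r < 1" shows "{x. cdf M x > r} \<noteq> {}"
proof -
  have "eventually (\<lambda>x. cdf M x > r) at_top"
    using order_tendstoD(1)[OF cdf_lim_at_top_prob assms] .
  then obtain x where "cdf M x > r" by (metis eventually_at_top_linorder order_refl)
  then show ?thesis by auto
qed

lemma qf_bdd: assumes "0 < r" shows "bdd_below {x. cdf M x > r}"
proof -
  have "eventually (\<lambda>x. cdf M x < r) at_bot"
    using order_tendstoD(2)[OF cdf_lim_at_bot assms] .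
  then obtain x0 where x0: "\<And>x. x \<le> x0 \<Longrightarrow> cdf M x < r" by (auto simp: eventually_at_bot_linorder)
  show ?thesis
  proof (rule bdd_belowI)
    fix x assume "x \<in> {x. cdf M x > r}"
    then show "x0 \<le> x" using x0[of x] by force
  qed
qed

lemma qf_le: assumes "0 < r" "cdf M x > r" shows "qf M r \<le> x"
  unfolding qf_def using assms qf_bdd by (intro cInf_lower) auto

lemma qf_lt_cdf: assumes "0 < r" "r < 1" "y < qf M r" shows "cdf M y \<le> r"
  using qf_le[OF assms(1), of y] assms(3) by force

lemma le_cdf_qf: assumes "0 < r" "r < 1" "qf M r \<le> x" shows "r \<le> cdf M x"
proof (rule ccontr)
  assume "\<not> r \<le> cdf M x"
  hence lt: "cdf M x < r" by simp
  have "((cdf M) \<longlongrightarrow> cdf M x) (at_right x)"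
    using cdf_is_right_cont[of x] by (simp add: continuous_within)
  then have "eventually (\<lambda>y. cdf M y < r) (at_right x)"
    using order_tendstoD(2) lt by blast
  then obtain b where b: "b > x" "\<And>y. x < y \<Longrightarrow> y < b \<Longrightarrow> cdf M y < r"
    by (auto simp: eventually_at_right_field)
  define y0 where "y0 = (x + b) / 2"
  have y0: "x < y0" "cdf M y0 < r" using b by (auto simp: y0_def)
  have "y0 \<le> qf M r"
    unfolding qf_def
  proof (rule cInf_greatest)
    show "{x. cdf M x > r} \<noteq> {}" using qf_nonempty[OF assms(2)] .
    fix y assume "y \<in> {x. cdf M x > r}"
    then have "cdf M y > r" by simp
    then show "y0 \<le> y" using y0 cdf_nondecreasing[of y y0] by force
  qed
  then show False using y0 assms(3) by simp
qed

lemma cdf_qf_ge: assumes "0 < r" "r < 1" shows "r \<le> cdf M (qf M r)"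
  using le_cdf_qf[OF assms] by simp

lemma qf_mono: assumes "0 < r1" "r1 \<le> r2" "r2 < 1" shows "qf M r1 \<le> qf M r2"
  unfolding qf_def
  using assms qf_nonempty[of r2] qf_bdd[of r1]
  by (intro cInf_superset_mono) auto

lemma cdf_qf_cont: assumes "0 < r" "r < 1" "measure M {qf M r} = 0"
  shows "cdf M (qf M r) = r"
proof (rule antisym)
  show "r \<le> cdf M (qf M r)" using cdf_qf_ge assms by simp
  have "isCont (cdf M) (qf M r)" using isCont_cdf assms by simp
  then have "(cdf M \<longlongrightarrow> cdf M (qf M r)) (at_left (qf M r))"
    by (simp add: isCont_def filterlim_at_split)
  moreover have "eventually (\<lambda>y. cdf M y \<le> r) (at_left (qf M r))"
    using qf_lt_cdf[OF assms(1,2)] by (auto simp: eventually_at_left_field intro: exI[of _ "qf M r - 1"])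
  ultimately show "cdf M (qf M r) \<le> r"
    by (rule tendsto_upperbound) simp
qed


end

definition Uni :: "real measure" where
  "Uni = density lborel (\<lambda>x. ennreal (indicator {0<..<1::real} x))"

lemma sets_Uni[simp, measurable_cong]: "sets Uni = sets borel" and space_Uni[simp]: "space Uni = UNIV"
  by (auto simp: Uni_def)

lemma emeasure_Uni: assumes "B \<in> sets borel"
  shows "emeasure Uni B = emeasure lborel ({0<..<1} \<inter> B)"
proof -
  have "emeasure Uni B = (\<integral>\<^sup>+ x. ennreal (indicator {0<..<1::real} x) * indicator B x \<partial>lborel)"
    unfolding Uni_def using assms by (subst emeasure_density) auto
  also have "\<dots> = (\<integral>\<^sup>+ x. indicator ({0<..<1} \<inter> B) x \<partial>lborel)"
    by (intro nn_integral_cong) (auto split: split_indicator)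
  also have "\<dots> = emeasure lborel ({0<..<1} \<inter> B)"
    using assms by (intro nn_integral_indicator) auto
  finally show ?thesis .
qed

lemma prob_space_Uni: "prob_space Uni"
  by (rule prob_spaceI) (simp add: emeasure_Uni)

lemma real_distribution_Uni: "real_distribution Uni"
  unfolding real_distribution_def real_distribution_axioms_def using prob_space_Uni by simp

lemma measure_Uni: assumes "B \<in> sets borel"
  shows "measure Uni B = measure lborel ({0<..<1} \<inter> B)"
  using emeasure_Uni[OF assms] by (simp add: measure_def)

lemma measure_Uni_lessThan: assumes "0 \<le> c" "c \<le> 1" shows "measure Uni {..<c} = c"
proof -
  have "{0<..<1} \<inter> {..<c} = {0<..<c}" using assms by auto
  then show ?thesis using assms by (simp add: measure_Uni)
qed

lemma measure_Uni_atMost: assumes "0 \<le> c" "c \<le> 1" shows "measure Uni {..c} = c"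
proof -
  interpret U: prob_space Uni by (rule prob_space_Uni)
  have "measure Uni {..c} \<ge> measure Uni {..<c}" by (intro U.finite_measure_mono) auto
  moreover have "measure Uni {..c} = measure lborel ({0<..<1} \<inter> {..c})" by (simp add: measure_Uni)
  moreover have "measure lborel ({0<..<1} \<inter> {..c}) \<le> measure lborel {0<..c}"
    using assms by (intro measure_mono_fmeasurable) (auto intro!: fmeasurableI)
  ultimately show ?thesis using measure_Uni_lessThan[OF assms] assms by simp
qed

context real_distribution
begin

definition Qt :: "real \<Rightarrow> real" where
  "Qt r = indicator {0<..<1} r * qf M r"

lemma Qt_measurable[measurable]: "Qt \<in> borel_measurable borel"
proof -
  have "mono_on {0<..<1} (qf M)"
    by (auto intro!: mono_onI qf_mono)
  then have "qf M \<in> borel_measurable (restrict_space borel {0<..<1})"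
    by (rule borel_measurable_mono_on_fnc)
  then have "(\<lambda>x. indicator {0<..<1} x *\<^sub>R qf M x) \<in> borel_measurable borel"
    by (subst (asm) borel_measurable_restrict_space_iff) auto
  then show ?thesis unfolding Qt_def[abs_def] by simp
qed

lemma Qt_measurable_Uni[measurable]: "Qt \<in> borel_measurable Uni"
  using Qt_measurable measurable_cong_sets[OF sets_Uni refl] by simp

lemma distr_Qt: "distr Uni borel Qt = M"
proof (rule cdf_unique)
  interpret U: prob_space Uni by (rule prob_space_Uni)
  show "real_distribution (distr Uni borel Qt)" by (intro U.real_distribution_distr) simp
  show "real_distribution M" by unfold_locales
  show "cdf (distr Uni borel Qt) = cdf M"
  proof
    fix x
    have "cdf (distr Uni borel Qt) x = measure Uni (Qt -` {..x})"
      unfolding cdf_def by (subst measure_distr) auto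
    also have "\<dots> = measure Uni ({0<..<1} \<inter> Qt -` {..x})"
    proof -
      have m: "Qt -` {..x} \<in> sets borel"
        using measurable_sets[OF Qt_measurable, of "{..x}"] by simp
      then show ?thesis
        using measure_Uni[OF m] measure_Uni[of "{0<..<1} \<inter> Qt -` {..x}"] m
        by (simp add: Int_assoc[symmetric])
    qed
    also have "\<dots> = cdf M x"
    proof (rule antisym)
      have "{0<..<1} \<inter> Qt -` {..x} \<subseteq> {..cdf M x}"
        using le_cdf_qf by (auto simp: Qt_def)
      then have "measure Uni ({0<..<1} \<inter> Qt -` {..x}) \<le> measure Uni {..cdf M x}"
        by (intro U.finite_measure_mono) auto
      then show "measure Uni ({0<..<1} \<inter> Qt -` {..x}) \<le> cdf M x"
        using measure_Uni_atMost cdf_nonneg cdf_bounded_prob by simp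
      have "{0<..<1} \<inter> {..<cdf M x} \<subseteq> {0<..<1} \<inter> Qt -` {..x}"
        using qf_le by (auto simp: Qt_def)
      then have "measure Uni ({0<..<1} \<inter> {..<cdf M x}) \<le> measure Uni ({0<..<1} \<inter> Qt -` {..x})"
        by (intro U.finite_measure_mono) auto
      moreover have "measure Uni ({0<..<1} \<inter> {..<cdf M x}) = measure Uni {..<cdf M x}"
        using measure_Uni[of "{..<cdf M x}"] measure_Uni[of "{0<..<1} \<inter> {..<cdf M x}"]
        by (simp add: Int_assoc[symmetric])
      ultimately show "cdf M x \<le> measure Uni ({0<..<1} \<inter> Qt -` {..x})"
        using measure_Uni_lessThan cdf_nonneg cdf_bounded_prob by simp
    qed
    finally show "cdf (distr Uni borel Qt) x = cdf M x" .
  qed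
qed


lemma cdf_measurable[measurable]: "cdf M \<in> borel_measurable borel"
  by (intro borel_measurable_mono monoI cdf_nondecreasing)

lemma cdf_sets[simp]: "{x. cdf M x \<le> u} \<in> sets M" "{x. cdf M x < u} \<in> sets M"
  unfolding M_is_borel by measurable

lemma measure_lessThan_cont: assumes "measure M {a} = 0" shows "measure M {..<a} = cdf M a"
proof -
  have "{..a} = {..<a} \<union> {a}" by auto
  moreover have "measure M ({..<a} \<union> {a}) = measure M {..<a} + measure M {a}"
    by (rule finite_measure_Union) auto
  ultimately have "measure M {..a} = measure M {..<a} + measure M {a}" by simp
  then show ?thesis using assms by (simp add: cdf_def)
qed

lemma cdf_cdf_eq:
  assumes cont: "\<And>x. measure M {x} = 0"
  shows "measure M {x. cdf M x \<le> u} = max 0 (min 1 u)"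
proof -
  have key: "measure M {x. cdf M x < u} \<le> u \<and> u \<le> measure M {x. cdf M x \<le> u}"
    if u: "0 < u" "u < 1" for u
  proof -
    have e: "measure M {..<qf M u} = u"
      using measure_lessThan_cont[OF cont] cdf_qf_cont[OF u cont] by simp
    have "{x. cdf M x < u} \<subseteq> {..<qf M u}"
    proof
      fix x assume "x \<in> {x. cdf M x < u}"
      then have "cdf M x < u" by simp
      moreover have "qf M u \<le> x \<Longrightarrow> u \<le> cdf M x" using le_cdf_qf[OF u] by blast
      ultimately show "x \<in> {..<qf M u}" by force
    qed
    then have 1: "measure M {x. cdf M x < u} \<le> u"
      using finite_measure_mono[OF _ sets_M[OF lessThan_borel]] e by metis
    have "{..<qf M u} \<subseteq> {x. cdf M x \<le> u}" using qf_lt_cdf[OF u] by auto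
    then have "u \<le> measure M {x. cdf M x \<le> u}"
      using finite_measure_mono[OF _ cdf_sets(1)] e by metis
    with 1 show ?thesis by simp
  qed
  have mid: "measure M {x. cdf M x \<le> u} = u" if u: "0 < u" "u < 1" for u
  proof (rule antisym)
    show "u \<le> measure M {x. cdf M x \<le> u}" using key[OF u] by simp
    show "measure M {x. cdf M x \<le> u} \<le> u"
    proof (rule field_le_epsilon)
      fix e :: real assume e: "0 < e"
      show "measure M {x. cdf M x \<le> u} \<le> u + e"
      proof (cases "u + e < 1")
        case True
        have "measure M {x. cdf M x \<le> u} \<le> measure M {x. cdf M x < u + e}"
          using e by (intro finite_measure_mono) auto
        also have "\<dots> \<le> u + e" using key[of "u + e"] True u e by simp
        finally show ?thesis .
      next
        case False
        then show ?thesis using prob_le_1[of "{x. cdf M x \<le> u}"] u by linarith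
      qed
    qed
  qed
  show ?thesis
  proof (cases "u \<ge> 1")
    case True
    then have "{x. cdf M x \<le> u} = space M" using cdf_bounded_prob order_trans by auto
    then show ?thesis using True prob_space.prob_space[OF prob_space_axioms] by simp
  next
    case u1: False
    show ?thesis
    proof (cases "u > 0")
      case True then show ?thesis using mid u1 by simp
    next
      case False
      have "measure M {x. cdf M x \<le> u} \<le> 0"
      proof (rule field_le_epsilon)
        fix e :: real assume e: "0 < e"
        show "measure M {x. cdf M x \<le> u} \<le> 0 + e"
        proof (cases "e < 1")
          case True
          have "measure M {x. cdf M x \<le> u} \<le> measure M {x. cdf M x \<le> e}"
            using e False by (intro finite_measure_mono) auto
          also have "\<dots> = e" using mid[of e] True e by simp
          finally show ?thesis by simp
        next
          case False
          then show ?thesis using prob_le_1[of "{x. cdf M x \<le> u}"] by linarith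
        qed
      qed
      then show ?thesis using False measure_nonneg[of M "{x. cdf M x \<le> u}"] by simp
    qed
  qed
qed

end

lemma cdf_Uni: "cdf Uni u = max 0 (min 1 u)"
proof -
  interpret U: prob_space Uni by (rule prob_space_Uni)
  show ?thesis
  proof (cases "u < 0")
    case True
    then have "{0<..<1} \<inter> {..u} = {}" by auto
    then show ?thesis using True by (simp add: cdf_def measure_Uni)
  next
    case False
    show ?thesis
    proof (cases "u \<le> 1")
      case True then show ?thesis using False measure_Uni_atMost by (simp add: cdf_def)
    next
      case u1: False
      have "measure Uni {..1} \<le> measure Uni {..u}" using u1 by (intro U.finite_measure_mono) auto
      then have "1 \<le> measure Uni {..u}" using measure_Uni_atMost[of 1] by simp
      then show ?thesis using u1 U.prob_le_1[of "{..u}"] by (simp add: cdf_def)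
    qed
  qed
qed

context real_distribution
begin

lemma distr_cdf_Uni:
  assumes cont: "\<And>x. measure M {x} = 0"
  shows "distr M borel (cdf M) = Uni"
proof (rule cdf_unique)
  show "real_distribution (distr M borel (cdf M))"
    using real_distribution_distr[OF measurable_finite_borel[OF cdf_measurable]] .
  show "real_distribution Uni" by (rule real_distribution_Uni)
  show "cdf (distr M borel (cdf M)) = cdf Uni"
  proof
    fix u
    have "cdf (distr M borel (cdf M)) u = measure (distr M borel (cdf M)) {..u}"
      by (rule cdf_def2)
    also have "\<dots> = measure M (cdf M -` {..u} \<inter> space M)"
      by (rule measure_distr) (auto intro: measurable_finite_borel cdf_measurable)
    also have "\<dots> = measure M {x. cdf M x \<le> u}" by (simp add: vimage_def)
    also have "\<dots> = cdf Uni u" using cdf_cdf_eq[OF cont] cdf_Uni by simp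
    finally show "cdf (distr M borel (cdf M)) u = cdf Uni u" .
  qed
qed


lemma transfer_Uni:
  fixes g :: "real \<Rightarrow> real"
  assumes g[measurable]: "g \<in> borel_measurable borel" and int: "integrable M g"
  shows "integrable lborel (\<lambda>r. indicator {0<..<1} r * g (Qt r))"
    and "integral\<^sup>L M g = integral\<^sup>L lborel (\<lambda>r. indicator {0<..<1} r * g (Qt r))"
proof -
  have m: "(\<lambda>r. g (Qt r)) \<in> borel_measurable borel" by measurable
  have i1: "integrable (distr Uni borel Qt) g" using int distr_Qt by simp
  have i2: "integrable Uni (\<lambda>r. g (Qt r))"
    using i1 by (subst (asm) integrable_distr_eq) auto
  show "integrable lborel (\<lambda>r. indicator {0<..<1} r * g (Qt r))"
    using i2 m unfolding Uni_def
    by (subst (asm) integrable_density) auto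
  have "integral\<^sup>L M g = integral\<^sup>L (distr Uni borel Qt) g" using distr_Qt by simp
  also have "\<dots> = integral\<^sup>L Uni (\<lambda>r. g (Qt r))" by (rule integral_distr) auto
  also have "\<dots> = integral\<^sup>L lborel (\<lambda>r. indicator {0<..<1} r * g (Qt r))"
    unfolding Uni_def using m by (subst integral_density) auto
  finally show "integral\<^sup>L M g = integral\<^sup>L lborel (\<lambda>r. indicator {0<..<1} r * g (Qt r))" .
qed

lemma RU:
  assumes int: "integrable M (\<lambda>x. x)" and p: "0 < p" "p < 1"
  shows "set_integrable lborel {p<..<1} (qf M)"
    and "(LBINT r:{p<..<1}. qf M r) = qf M p * (1 - p) + (\<integral>x. max (x - qf M p) 0 \<partial>M)"
proof -
  define v where "v = qf M p"
  have gi: "integrable M (\<lambda>x. max (x - v) 0)"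
    using int by (intro integrable_max integrable_diff) auto
  have gm: "(\<lambda>x. max (x - v) 0) \<in> borel_measurable borel" by measurable
  note tr = transfer_Uni[OF gm gi]
  have pw: "indicator {0<..<1} r * max (Qt r - v) 0 = indicator {p<..<1} r * (qf M r - v)" for r
  proof (cases "r \<in> {0<..<1}")
    case True
    show ?thesis
    proof (cases "r > p")
      case True
      then have "v \<le> qf M r" unfolding v_def using qf_mono[of p r] p \<open>r \<in> {0<..<1}\<close> by auto
      then show ?thesis using True \<open>r \<in> {0<..<1}\<close> by (simp add: Qt_def)
    next
      case False
      then have "qf M r \<le> v" unfolding v_def using qf_mono[of r p] p \<open>r \<in> {0<..<1}\<close> by auto
      then show ?thesis using False \<open>r \<in> {0<..<1}\<close> by (simp add: Qt_def)
    qed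
  next
    case False
    then show ?thesis using p by (auto simp: Qt_def)
  qed
  have i1: "integrable lborel (\<lambda>r. indicator {p<..<1} r * (qf M r - v))"
    using tr(1) pw by simp
  have i2: "integrable lborel (\<lambda>r. indicator {p<..<1} r * v)"
    using p by (intro integrable_mult_left integrable_real_indicator) auto
  have eq: "(\<lambda>r. indicator {p<..<1} r *\<^sub>R qf M r) = (\<lambda>r. indicator {p<..<1} r * (qf M r - v) + indicator {p<..<1} r * v)"
    by (auto simp: fun_eq_iff algebra_simps)
  show "set_integrable lborel {p<..<1} (qf M)"
    unfolding set_integrable_def eq by (rule Bochner_Integration.integrable_add[OF i1 i2])
  have "(LBINT r:{p<..<1}. qf M r) = integral\<^sup>L lborel (\<lambda>r. indicator {p<..<1} r * (qf M r - v)) + integral\<^sup>L lborel (\<lambda>r. indicator {p<..<1} r * v)"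
    unfolding set_lebesgue_integral_def eq by (rule Bochner_Integration.integral_add[OF i1 i2])
  also have "integral\<^sup>L lborel (\<lambda>r. indicator {p<..<1} r * v) = v * (1 - p)"
    using p by simp
  also have "integral\<^sup>L lborel (\<lambda>r. indicator {p<..<1} r * (qf M r - v)) = (\<integral>x. max (x - v) 0 \<partial>M)"
    using tr(2) pw by simp
  finally show "(LBINT r:{p<..<1}. qf M r) = qf M p * (1 - p) + (\<integral>x. max (x - qf M p) 0 \<partial>M)"
    unfolding v_def by simp
qed

lemma RU_min:
  assumes int: "integrable M (\<lambda>x. x)" and p: "0 < p" "p < 1"
  shows "(LBINT r:{p<..<1}. qf M r) \<le> t * (1 - p) + (\<integral>x. max (x - t) 0 \<partial>M)"
proof -
  have gi: "integrable M (\<lambda>x. max (x - t) 0)"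
    using int by (intro integrable_max integrable_diff) auto
  have gm: "(\<lambda>x. max (x - t) 0) \<in> borel_measurable borel" by measurable
  note tr = transfer_Uni[OF gm gi]
  have i2: "integrable lborel (\<lambda>r. indicator {p<..<1} r * t)"
    using p by (intro integrable_mult_left integrable_real_indicator) auto
  have "(LBINT r:{p<..<1}. qf M r) = integral\<^sup>L lborel (\<lambda>r. indicator {p<..<1} r * qf M r)"
    by (simp add: set_lebesgue_integral_def)
  also have "\<dots> \<le> integral\<^sup>L lborel (\<lambda>r. indicator {p<..<1} r * t + indicator {0<..<1} r * max (Qt r - t) 0)"
  proof (rule integral_mono)
    show "integrable lborel (\<lambda>r. indicator {p<..<1} r * qf M r)"
      using RU(1)[OF int p] by (simp add: set_integrable_def)
    show "integrable lborel (\<lambda>r. indicator {p<..<1} r * t + indicator {0<..<1} r * max (Qt r - t) 0)"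
      by (rule Bochner_Integration.integrable_add[OF i2 tr(1)])
    fix r show "indicator {p<..<1} r * qf M r \<le> indicator {p<..<1} r * t + indicator {0<..<1} r * max (Qt r - t) 0"
      using p by (auto simp: Qt_def indicator_def)
  qed
  also have "\<dots> = t * (1 - p) + (\<integral>x. max (x - t) 0 \<partial>M)"
    using Bochner_Integration.integral_add[OF i2 tr(1)] tr(2) p by simp
  finally show ?thesis .
qed


lemma qf_less_cdf: assumes "0 < r" "r < 1" "qf M r < x" shows "r < cdf M x"
proof -
  obtain y where "y \<in> {x. cdf M x > r}" "y < x"
    using assms(3) qf_nonempty[OF assms(2)] qf_bdd[OF assms(1)] unfolding qf_def
    by (auto simp: cInf_less_iff)
  then show ?thesis using cdf_nondecreasing[of y x] by simp
qed

end

context prob_space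
begin

lemma cdf_distr_eq: fixes Z :: "'a \<Rightarrow> real"
  assumes [measurable]: "Z \<in> borel_measurable M"
  shows "cdf (distr M borel Z) x = prob {w \<in> space M. Z w \<le> x}"
proof -
  have "cdf (distr M borel Z) x = measure (distr M borel Z) {..x}" by (rule cdf_def2)
  also have "\<dots> = prob (Z -` {..x} \<inter> space M)" by (rule measure_distr) auto
  also have "Z -` {..x} \<inter> space M = {w \<in> space M. Z w \<le> x}" by auto
  finally show ?thesis .
qed

lemma prob_distr_eq: fixes Z :: "'a \<Rightarrow> real"
  assumes [measurable]: "Z \<in> borel_measurable M" and B: "B \<in> sets borel"
  shows "measure (distr M borel Z) B = prob {w \<in> space M. Z w \<in> B}"
proof -
  have "measure (distr M borel Z) B = prob (Z -` B \<inter> space M)" by (rule measure_distr[OF assms(1) B])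
  also have "Z -` B \<inter> space M = {w \<in> space M. Z w \<in> B}" by auto
  finally show ?thesis .
qed

lemma VaR_qf: fixes Z :: "'a \<Rightarrow> real"
  assumes "Z \<in> borel_measurable M" shows "VaR M r Z = qf (distr M borel Z) r"
  unfolding VaR_def qf_def using cdf_distr_eq[OF assms] by simp

lemma ES_qf: fixes Z :: "'a \<Rightarrow> real"
  assumes "Z \<in> borel_measurable M"
  shows "ES M r Z = (LBINT q:{r<..<1}. qf (distr M borel Z) q) / (1 - r)"
  unfolding ES_def using VaR_qf[OF assms] by simp

lemma cont_distr: fixes Z :: "'a \<Rightarrow> real"
  assumes "Z \<in> borel_measurable M" "continuously_distributed M Z"
  shows "measure (distr M borel Z) {x} = 0"
  using prob_distr_eq[OF assms(1), of "{x}"] assms(2) unfolding continuously_distributed_def by simp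

lemma int_distr: fixes Z :: "'a \<Rightarrow> real"
  assumes [measurable]: "Z \<in> borel_measurable M" "integrable M Z"
  shows "integrable (distr M borel Z) (\<lambda>x. x)"
  using integrable_distr_eq[OF assms(1), of "\<lambda>x. x"] assms(2) by simp

lemma integral_pos_distr: fixes Z :: "'a \<Rightarrow> real"
  assumes [measurable]: "Z \<in> borel_measurable M"
  shows "(\<integral>x. max (x - t) 0 \<partial>distr M borel Z) = (\<integral>w. max (Z w - t) 0 \<partial>M)"
  using integral_distr[OF assms, of "\<lambda>x. max (x - t) 0"] by simp

lemma RU_M: fixes Z :: "'a \<Rightarrow> real"
 
  assumes [measurable]: "Z \<in> borel_measurable M" and "integrable M Z" and p: "0 < p" "p < 1"
  shows "(1 - p) * ES M p Z = VaR M p Z * (1 - p) + (\<integral>w. max (Z w - VaR M p Z) 0 \<partial>M)"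
proof -
  interpret N: real_distribution "distr M borel Z" by simp
  show ?thesis
    using N.RU(2)[OF int_distr[OF assms(1,2)] p] p
    unfolding ES_qf[OF assms(1)] VaR_qf[OF assms(1)] integral_pos_distr[OF assms(1)]
    by simp
qed

lemma RU_min_M: fixes Z :: "'a \<Rightarrow> real"
 
  assumes [measurable]: "Z \<in> borel_measurable M" and "integrable M Z" and p: "0 < p" "p < 1"
  shows "(1 - p) * ES M p Z \<le> t * (1 - p) + (\<integral>w. max (Z w - t) 0 \<partial>M)"
proof -
  interpret N: real_distribution "distr M borel Z" by simp
  show ?thesis
    using N.RU_min[OF int_distr[OF assms(1,2)] p, of t] p
    unfolding ES_qf[OF assms(1)] integral_pos_distr[OF assms(1)]
    by simp
qed

lemma tail_prob: fixes Z :: "'a \<Rightarrow> real"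
 
  assumes [measurable]: "Z \<in> borel_measurable M" and "continuously_distributed M Z" and p: "0 < p" "p < 1"
  shows "prob {w \<in> space M. Z w \<le> VaR M p Z} = p"
    and "prob {w \<in> space M. VaR M p Z < Z w} = 1 - p"
proof -
  interpret N: real_distribution "distr M borel Z" by simp
  show 1: "prob {w \<in> space M. Z w \<le> VaR M p Z} = p"
    using N.cdf_qf_cont[OF p cont_distr[OF assms(1,2)]]
    unfolding VaR_qf[OF assms(1)] cdf_distr_eq[OF assms(1)] .
  have "{w \<in> space M. VaR M p Z < Z w} = space M - {w \<in> space M. Z w \<le> VaR M p Z}" by auto
  then show "prob {w \<in> space M. VaR M p Z < Z w} = 1 - p"
    using 1 by (simp add: prob_compl)
qed


lemma pos_int: fixes Z :: "'a \<Rightarrow> real"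
  assumes [measurable]: "Z \<in> borel_measurable M" and "integrable M Z"
  shows "integrable M (\<lambda>w. max (Z w - t) 0)"
  using assms by (intro integrable_max Bochner_Integration.integrable_diff) auto

lemma ind_int: fixes Z :: "'a \<Rightarrow> real"
  assumes [measurable]: "Z \<in> borel_measurable M" and int: "integrable M Z" and B[measurable]: "B \<in> sets M"
  shows "integrable M (\<lambda>w. indicator B w * c)"
    and "integrable M (\<lambda>w. Z w * indicator B w)"
    and "(\<integral>w. indicator B w * c \<partial>M) = prob B * c"
proof -
  have e: "emeasure M B < \<infinity>" by (simp add: less_top[symmetric])
  show "integrable M (\<lambda>w. indicator B w * c)"
    using integrable_real_indicator[OF B e] by (rule integrable_mult_left)
  show "integrable M (\<lambda>w. Z w * indicator B w)"
    by (rule integrable_real_mult_indicator[OF B int])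
  show "(\<integral>w. indicator B w * c \<partial>M) = prob B * c" by simp
qed

lemma ind_eq: fixes Z :: "'a \<Rightarrow> real"
  assumes [measurable]: "Z \<in> borel_measurable M" and int: "integrable M Z" and B[measurable]: "B \<in> sets M"
    and ae: "AE w in M. (w \<in> B \<longrightarrow> c \<le> Z w) \<and> (w \<notin> B \<longrightarrow> Z w \<le> c)"
  shows "(\<integral>w. Z w * indicator B w \<partial>M) = prob B * c + (\<integral>w. max (Z w - c) 0 \<partial>M)"
proof -
  have "(\<integral>w. Z w * indicator B w \<partial>M) = (\<integral>w. indicator B w * c + max (Z w - c) 0 \<partial>M)"
    by (rule integral_cong_AE) (use ae in \<open>auto split: split_indicator\<close>)
  also have "\<dots> = (\<integral>w. indicator B w * c \<partial>M) + (\<integral>w. max (Z w - c) 0 \<partial>M)"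
    by (rule Bochner_Integration.integral_add[OF ind_int(1)[OF assms(1-3)] pos_int[OF assms(1,2)]])
  finally show ?thesis using ind_int(3)[OF assms(1-3)] by simp
qed

lemma ind_le: fixes Z :: "'a \<Rightarrow> real"
  assumes [measurable]: "Z \<in> borel_measurable M" and int: "integrable M Z" and B[measurable]: "B \<in> sets M"
  shows "(\<integral>w. Z w * indicator B w \<partial>M) \<le> prob B * t + (\<integral>w. max (Z w - t) 0 \<partial>M)"
proof -
  have "(\<integral>w. Z w * indicator B w \<partial>M) \<le> (\<integral>w. indicator B w * t + max (Z w - t) 0 \<partial>M)"
    by (rule integral_mono[OF ind_int(2)[OF assms] Bochner_Integration.integrable_add[OF ind_int(1)[OF assms] pos_int[OF assms(1,2)]]])
       (auto split: split_indicator)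
  also have "\<dots> = (\<integral>w. indicator B w * t \<partial>M) + (\<integral>w. max (Z w - t) 0 \<partial>M)"
    by (rule Bochner_Integration.integral_add[OF ind_int(1)[OF assms(1-3)] pos_int[OF assms(1,2)]])
  finally show ?thesis using ind_int(3)[OF assms(1-3)] by simp
qed

lemma ES_sub:
  fixes X Y :: "'a \<Rightarrow> real"
  assumes [measurable]: "X \<in> borel_measurable M" "Y \<in> borel_measurable M"
    and iX: "integrable M X" and iY: "integrable M Y" and p: "0 < p" "p < 1"
  shows "ES M p (\<lambda>w. X w + Y w) \<le> ES M p X + ES M p Y"
proof -
  define a where "a = VaR M p X"
  define b where "b = VaR M p Y"
  have iS: "integrable M (\<lambda>w. X w + Y w)" using iX iY by simp
  have "(1 - p) * ES M p (\<lambda>w. X w + Y w) \<le> (a + b) * (1 - p) + (\<integral>w. max (X w + Y w - (a + b)) 0 \<partial>M)"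
    by (rule RU_min_M[OF _ iS p]) simp
  also have "(\<integral>w. max (X w + Y w - (a + b)) 0 \<partial>M) \<le> (\<integral>w. max (X w - a) 0 + max (Y w - b) 0 \<partial>M)"
    by (rule integral_mono[OF pos_int[OF _ iS] Bochner_Integration.integrable_add[OF pos_int[OF _ iX] pos_int[OF _ iY]]]) auto
  also have "\<dots> = (\<integral>w. max (X w - a) 0 \<partial>M) + (\<integral>w. max (Y w - b) 0 \<partial>M)"
    by (rule Bochner_Integration.integral_add[OF pos_int[OF _ iX] pos_int[OF _ iY]]) auto
  finally have "(1 - p) * ES M p (\<lambda>w. X w + Y w) \<le> (1 - p) * ES M p X + (1 - p) * ES M p Y"
    using RU_M[OF _ iX p] RU_M[OF _ iY p] unfolding a_def b_def by (simp add: algebra_simps)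
  then show ?thesis using p by (simp add: distrib_left[symmetric])
qed

lemma ES_lower:
  fixes Z1 Z2 :: "'a \<Rightarrow> real"
  assumes [measurable]: "Z1 \<in> borel_measurable M" "Z2 \<in> borel_measurable M"
    and i1: "integrable M Z1" and i2: "integrable M Z2" and p: "0 < p" "p < 1"
    and B[measurable]: "B \<in> sets M" and PB: "prob B = 1 - p"
    and ae1: "AE w in M. (w \<in> B \<longrightarrow> c1 \<le> Z1 w) \<and> (w \<notin> B \<longrightarrow> Z1 w \<le> c1)"
    and ae2: "AE w in M. (w \<in> B \<longrightarrow> c2 \<le> Z2 w) \<and> (w \<notin> B \<longrightarrow> Z2 w \<le> c2)"
  shows "ES M p Z1 + ES M p Z2 \<le> ES M p (\<lambda>w. Z1 w + Z2 w)"
proof -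
  have iS: "integrable M (\<lambda>w. Z1 w + Z2 w)" using i1 i2 by simp
  have "(1 - p) * ES M p Z1 \<le> (\<integral>w. Z1 w * indicator B w \<partial>M)"
    using RU_min_M[OF _ i1 p, of c1] ind_eq[OF _ i1 B ae1] PB by (simp add: mult.commute)
  moreover have "(1 - p) * ES M p Z2 \<le> (\<integral>w. Z2 w * indicator B w \<partial>M)"
    using RU_min_M[OF _ i2 p, of c2] ind_eq[OF _ i2 B ae2] PB by (simp add: mult.commute)
  moreover have "(\<integral>w. Z1 w * indicator B w \<partial>M) + (\<integral>w. Z2 w * indicator B w \<partial>M)
      = (\<integral>w. (Z1 w + Z2 w) * indicator B w \<partial>M)"
    by (subst Bochner_Integration.integral_add[OF ind_int(2)[OF _ i1 B] ind_int(2)[OF _ i2 B], symmetric])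
       (auto simp: algebra_simps)
  moreover have "(\<integral>w. (Z1 w + Z2 w) * indicator B w \<partial>M) \<le> (1 - p) * ES M p (\<lambda>w. Z1 w + Z2 w)"
    using ind_le[OF _ iS B, of "VaR M p (\<lambda>w. Z1 w + Z2 w)"] RU_M[OF _ iS p] PB
    by (simp add: mult.commute)
  ultimately have "(1 - p) * (ES M p Z1 + ES M p Z2) \<le> (1 - p) * ES M p (\<lambda>w. Z1 w + Z2 w)"
    by (simp add: distrib_left)
  then show ?thesis using p by simp
qed


lemma distr_AE_eq: fixes X X0 :: "'a \<Rightarrow> real"
  assumes "X \<in> borel_measurable M" "X0 \<in> borel_measurable M" "AE w in M. X0 w = X w"
  shows "distr M borel X0 = distr M borel X"
  using assms by (intro distr_cong_AE) auto

lemma int_same_distr: fixes X X' :: "'a \<Rightarrow> real"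
  assumes [measurable]: "X \<in> borel_measurable M" "X' \<in> borel_measurable M"
    and d: "distr M borel X' = distr M borel X" and i: "integrable M X"
  shows "integrable M X'"
proof -
  have "integrable (distr M borel X') (\<lambda>x. x)" using int_distr[OF assms(1) i] d by simp
  then show ?thesis using integrable_distr_eq[OF assms(2), of "\<lambda>x. x"] by simp
qed

lemma cont_same_distr: fixes X X' :: "'a \<Rightarrow> real"
  assumes [measurable]: "X \<in> borel_measurable M" "X' \<in> borel_measurable M"
    and d: "distr M borel X' = distr M borel X" and c: "continuously_distributed M X"
  shows "continuously_distributed M X'"
  unfolding continuously_distributed_def
proof
  fix x
  have "prob {w \<in> space M. X' w = x} = measure (distr M borel X') {x}"
    using prob_distr_eq[OF assms(2), of "{x}"] by simp
  also have "\<dots> = 0" using d cont_distr[OF assms(1) c] by simp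
  finally show "prob {w \<in> space M. X' w = x} = 0" .
qed

lemma ii_forward:
  fixes X Y :: "'a \<Rightarrow> real"
  assumes [measurable]: "X \<in> borel_measurable M" "Y \<in> borel_measurable M"
    and iX: "integrable M X" and iY: "integrable M Y" and cX: "continuously_distributed M X"
    and p: "0 < p" "p < 1" and wc: "weakly_comonotonic_P M p X Y"
  shows "ES M p X + ES M p Y \<le> ES M p (\<lambda>w. X w + Y w)"
proof -
  obtain X0 Y0 where [measurable]: "X0 \<in> borel_measurable M" "Y0 \<in> borel_measurable M"
    and aeX: "AE w in M. X0 w = X w" and aeY: "AE w in M. Y0 w = Y w"
    and wc0: "wcomono_pts (P_pairs M p X0) X0 Y0"
    using wc unfolding weakly_comonotonic_P_def for_some_versions_def by blast
  have dX: "distr M borel X0 = distr M borel X" by (rule distr_AE_eq) (auto simp: aeX)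
  have dY: "distr M borel Y0 = distr M borel Y" by (rule distr_AE_eq) (auto simp: aeY)
  have dS: "distr M borel (\<lambda>w. X0 w + Y0 w) = distr M borel (\<lambda>w. X w + Y w)"
    by (rule distr_AE_eq) (use aeX aeY in auto)
  have iX0: "integrable M X0" by (rule int_same_distr[OF _ _ dX iX]) auto
  have iY0: "integrable M Y0" by (rule int_same_distr[OF _ _ dY iY]) auto
  have cX0: "continuously_distributed M X0" by (rule cont_same_distr[OF _ _ dX cX]) auto
  define a where "a = VaR M p X0"
  define A where "A = {w \<in> space M. a < X0 w}"
  have A[measurable]: "A \<in> sets M" unfolding A_def by measurable
  have PA: "prob A = 1 - p" unfolding A_def a_def using tail_prob(2)[OF _ cX0 p] by simp
  have PAc: "prob (space M - A) = p" using PA by (simp add: prob_compl)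
  have "A \<noteq> {}" using PA p by auto
  have "space M - A \<noteq> {}"
  proof
    assume "space M - A = {}"
    then have "prob (space M - A) = 0" by (metis measure_empty)
    then show False using PAc p by simp
  qed
  then obtain w' where w': "w' \<in> space M" "w' \<notin> A" by auto
  have keyY: "Y0 w' \<le> Y0 w" if "w \<in> A" "w' \<in> space M" "w' \<notin> A" for w w'
  proof -
    have "(w, w') \<in> P_pairs M p X0" using that unfolding P_pairs_def tail_set_def A_def a_def by auto
    then have "(X0 w - X0 w') * (Y0 w - Y0 w') \<ge> 0" using wc0 unfolding wcomono_pts_def by auto
    moreover have "X0 w - X0 w' > 0" using that unfolding A_def by auto
    ultimately show ?thesis by (simp add: zero_le_mult_iff)
  qed
  define c where "c = Inf (Y0 ` A)"
  have bdd: "bdd_below (Y0 ` A)" using keyY[OF _ w'] by (auto intro!: bdd_belowI2)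
  have c1: "c \<le> Y0 w" if "w \<in> A" for w unfolding c_def using bdd that by (intro cInf_lower) auto
  have c2: "Y0 w \<le> c" if "w \<in> space M" "w \<notin> A" for w
    unfolding c_def using \<open>A \<noteq> {}\<close> keyY[OF _ that] by (intro cInf_greatest) auto
  have "ES M p X0 + ES M p Y0 \<le> ES M p (\<lambda>w. X0 w + Y0 w)"
  proof (rule ES_lower[OF _ _ iX0 iY0 p A PA])
    show "AE w in M. (w \<in> A \<longrightarrow> a \<le> X0 w) \<and> (w \<notin> A \<longrightarrow> X0 w \<le> a)"
      by (rule AE_I2) (auto simp: A_def)
    show "AE w in M. (w \<in> A \<longrightarrow> c \<le> Y0 w) \<and> (w \<notin> A \<longrightarrow> Y0 w \<le> c)"
      by (rule AE_I2) (auto intro: c1 c2)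
  qed auto
  moreover have "ES M p X0 = ES M p X"
    using ES_qf[of X0] ES_qf[of X] dX by simp
  moreover have "ES M p Y0 = ES M p Y"
    using ES_qf[of Y0] ES_qf[of Y] dY by simp
  moreover have mS0: "(\<lambda>w. X0 w + Y0 w) \<in> borel_measurable M" by measurable
  moreover have mS: "(\<lambda>w. X w + Y w) \<in> borel_measurable M" by measurable
  moreover have "ES M p (\<lambda>w. X0 w + Y0 w) = ES M p (\<lambda>w. X w + Y w)"
    using ES_qf[OF mS0] ES_qf[OF mS] dS by simp
  ultimately show ?thesis by simp
qed

lemma ii_backward:
  fixes X Y :: "'a \<Rightarrow> real"
  assumes [measurable]: "X \<in> borel_measurable M" "Y \<in> borel_measurable M"
    and iX: "integrable M X" and iY: "integrable M Y" and cX: "continuously_distributed M X"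
    and p: "0 < p" "p < 1" and le: "ES M p X + ES M p Y \<le> ES M p (\<lambda>w. X w + Y w)"
  shows "weakly_comonotonic_P M p X Y"
proof -
  define a where "a = VaR M p X"
  define b where "b = VaR M p Y"
  have iS: "integrable M (\<lambda>w. X w + Y w)" using iX iY by simp
  define h where "h w = max (X w - a) 0 + max (Y w - b) 0 - max (X w + Y w - (a + b)) 0" for w
  have ih: "integrable M h" unfolding h_def
    by (intro Bochner_Integration.integrable_diff Bochner_Integration.integrable_add pos_int iX iY iS) auto
  have h0: "0 \<le> h w" for w unfolding h_def by (auto simp: max_def)
  have "(1 - p) * ES M p (\<lambda>w. X w + Y w) \<le> (a + b) * (1 - p) + (\<integral>w. max (X w + Y w - (a + b)) 0 \<partial>M)"
    by (rule RU_min_M[OF _ iS p]) simp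
  moreover have "(1 - p) * (ES M p X + ES M p Y) = (a + b) * (1 - p) + ((\<integral>w. max (X w - a) 0 \<partial>M) + (\<integral>w. max (Y w - b) 0 \<partial>M))"
    using RU_M[OF _ iX p] RU_M[OF _ iY p] unfolding a_def b_def by (simp add: algebra_simps)
  moreover have "(1 - p) * (ES M p X + ES M p Y) \<le> (1 - p) * ES M p (\<lambda>w. X w + Y w)"
    using le p by simp
  moreover have "integral\<^sup>L M h = (\<integral>w. max (X w - a) 0 \<partial>M) + (\<integral>w. max (Y w - b) 0 \<partial>M) - (\<integral>w. max (X w + Y w - (a + b)) 0 \<partial>M)"
    unfolding h_def
    by (subst Bochner_Integration.integral_diff Bochner_Integration.integral_add;
        (intro Bochner_Integration.integrable_add pos_int iX iY iS)?; simp?)+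
  ultimately have "integral\<^sup>L M h \<le> 0" by linarith
  moreover have "0 \<le> integral\<^sup>L M h" using h0 by (intro Bochner_Integration.integral_nonneg) auto
  ultimately have "integral\<^sup>L M h = 0" by simp
  then have aeh: "AE w in M. h w = 0" using integral_nonneg_eq_0_iff_AE[OF ih] h0 by simp
  have "prob {w \<in> space M. X w = a} = 0" using cX unfolding continuously_distributed_def by simp
  then have aea: "AE w in M. X w \<noteq> a"
    using prob_eq_0[of "{w \<in> space M. X w = a}"] by (auto elim: AE_mp)
  define good where "good w \<longleftrightarrow> (a < X w \<longrightarrow> b \<le> Y w) \<and> (X w \<le> a \<longrightarrow> Y w \<le> b)" for w
  have aeg: "AE w in M. good w"
    using aeh aea
  proof (eventually_elim)
    case (elim w)
    then show ?case unfolding good_def h_def by (auto simp: max_def split: if_splits)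
  qed
  define Y0 where "Y0 w = (if good w then Y w else b)" for w
  have [measurable]: "Y0 \<in> borel_measurable M" unfolding Y0_def good_def by measurable
  show ?thesis
    unfolding weakly_comonotonic_P_def for_some_versions_def
  proof (intro exI conjI)
    show "X \<in> borel_measurable M" "Y0 \<in> borel_measurable M" by simp_all
    show "AE w in M. X w = X w" by simp
    show "AE w in M. Y0 w = Y w" using aeg by eventually_elim (simp add: Y0_def)
    have *: "0 \<le> (X w - X w') * (Y0 w - Y0 w')" if "a < X w" "X w' \<le> a" for w w'
    proof -
      have 1: "X w - X w' > 0" using that by auto
      have "Y0 w' \<le> Y0 w" using that unfolding Y0_def good_def by auto
      then show ?thesis using 1 by simp
    qed
    show "wcomono_pts (P_pairs M p X) X Y0"
      unfolding wcomono_pts_def P_pairs_def tail_set_def a_def[symmetric]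
      using * by (auto simp: not_less)
  qed
qed


lemma AE_Uni: "AE r in Uni. 0 < r \<and> r < 1"
  unfolding Uni_def by (subst AE_density) (auto split: split_indicator)

lemma coupling:
  fixes X Y :: "'a \<Rightarrow> real"
  assumes [measurable]: "X \<in> borel_measurable M" "Y \<in> borel_measurable M"
    and iX: "integrable M X" and iY: "integrable M Y" and cX: "continuously_distributed M X"
    and p: "0 < p" "p < 1"
  shows "\<exists>Y'. Y' \<in> borel_measurable M \<and> distr M borel Y' = distr M borel Y \<and>
           ES M p X + ES M p Y \<le> ES M p (\<lambda>w. X w + Y' w)"
proof -
  define NX where "NX = distr M borel X"
  define NY where "NY = distr M borel Y"
  interpret NX: real_distribution NX unfolding NX_def by simp
  interpret NY: real_distribution NY unfolding NY_def by simp
  define W where "W w = cdf NX (X w)" for w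
  define Y' where "Y' w = NY.Qt (W w)" for w
  have [measurable]: "W \<in> borel_measurable M"
    unfolding W_def using NX.cdf_measurable by measurable
  have [measurable]: "Y' \<in> borel_measurable M"
    unfolding Y'_def using NY.Qt_measurable by measurable
  have dW: "distr M borel W = Uni"
  proof -
    have "distr M borel W = distr (distr M borel X) borel (cdf NX)"
      unfolding W_def by (subst distr_distr) (auto simp: comp_def intro: NX.cdf_measurable)
    also have "\<dots> = Uni" unfolding NX_def[symmetric]
      using NX.distr_cdf_Uni cont_distr[OF _ cX] unfolding NX_def by simp
    finally show ?thesis .
  qed
  have dY': "distr M borel Y' = distr M borel Y"
  proof -
    have "distr M borel Y' = distr (distr M borel W) borel NY.Qt"
      unfolding Y'_def by (subst distr_distr) (auto simp: comp_def)
    also have "\<dots> = NY" using dW NY.distr_Qt by simp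
    finally show ?thesis unfolding NY_def .
  qed
  have iY': "integrable M Y'" by (rule int_same_distr[OF _ _ dY' iY]) auto
  have aeW: "AE w in M. 0 < W w \<and> W w < 1"
  proof -
    have "AE r in distr M borel W. 0 < r \<and> r < 1" unfolding dW by (rule AE_Uni)
    then show ?thesis by (subst (asm) AE_distr_iff) auto
  qed
  define a where "a = VaR M p X"
  define b where "b = VaR M p Y"
  have a: "a = qf NX p" unfolding a_def NX_def by (rule VaR_qf) simp
  have b: "b = qf NY p" unfolding b_def NY_def by (rule VaR_qf) simp
  have cdfa: "cdf NX a = p" unfolding a
    using NX.cdf_qf_cont[OF p] cont_distr[OF _ cX] unfolding NX_def by simp
  define A where "A = {w \<in> space M. a < X w}"
  have A[measurable]: "A \<in> sets M" unfolding A_def by measurable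
  have PA: "prob A = 1 - p" unfolding A_def a_def using tail_prob(2)[OF _ cX p] by simp
  have "ES M p X + ES M p Y' \<le> ES M p (\<lambda>w. X w + Y' w)"
  proof (rule ES_lower[OF _ _ iX iY' p A PA])
    show "AE w in M. (w \<in> A \<longrightarrow> a \<le> X w) \<and> (w \<notin> A \<longrightarrow> X w \<le> a)"
      by (rule AE_I2) (auto simp: A_def)
    show "AE w in M. (w \<in> A \<longrightarrow> b \<le> Y' w) \<and> (w \<notin> A \<longrightarrow> Y' w \<le> b)"
    proof (rule AE_mp[OF aeW], rule AE_I2, rule impI)
      fix w assume w: "w \<in> space M" "0 < W w \<and> W w < 1"
      have 1: "b \<le> Y' w" if "w \<in> A"
      proof -
        from that have "a < X w" by (simp add: A_def)
        then have "p \<le> W w" unfolding W_def using cdfa NX.cdf_nondecreasing[of a "X w"] by simp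
        then show "b \<le> Y' w" unfolding b Y'_def NY.Qt_def using w p NY.qf_mono[of p "W w"] by simp
      qed
      have 2: "Y' w \<le> b" if "w \<notin> A"
      proof -
        from that have "X w \<le> a" using w by (simp add: A_def)
        then have "W w \<le> p" unfolding W_def using cdfa NX.cdf_nondecreasing[of "X w" a] by simp
        then show "Y' w \<le> b" unfolding b Y'_def NY.Qt_def using w p NY.qf_mono[of "W w" p] by simp
      qed
      show "(w \<in> A \<longrightarrow> b \<le> Y' w) \<and> (w \<notin> A \<longrightarrow> Y' w \<le> b)" using 1 2 by blast
    qed
  qed auto
  moreover have "ES M p Y' = ES M p Y" using ES_qf[of Y'] ES_qf[of Y] dY' by simp
  ultimately show ?thesis using dY' by (intro exI[of _ Y']) auto
qed


lemma distr_W: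
  fixes X :: "'a \<Rightarrow> real"
  assumes [measurable]: "X \<in> borel_measurable M" and cX: "continuously_distributed M X"
  shows "distr M borel (\<lambda>w. cdf (distr M borel X) (X w)) = Uni"
proof -
  define NX where "NX = distr M borel X"
  interpret NX: real_distribution NX unfolding NX_def by simp
  have "distr M borel (\<lambda>w. cdf NX (X w)) = distr (distr M borel X) borel (cdf NX)"
    by (subst distr_distr) (auto simp: comp_def intro: NX.cdf_measurable)
  also have "\<dots> = Uni" unfolding NX_def[symmetric]
    using NX.distr_cdf_Uni cont_distr[OF _ cX] unfolding NX_def by simp
  finally show ?thesis unfolding NX_def .
qed

lemma part_i:
  fixes X Y X' Y' :: "'a \<Rightarrow> real"
  assumes [measurable]: "X \<in> borel_measurable M" "Y \<in> borel_measurable M"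
    and cX: "continuously_distributed M X" and p: "0 < p" "p < 1"
    and wc: "weakly_comonotonic_P M p X Y" and wa: "weakly_antimonotonic_Q M p X Y"
    and [measurable]: "X' \<in> borel_measurable M" "Y' \<in> borel_measurable M"
    and dX': "distr M borel X' = distr M borel X" and dY': "distr M borel Y' = distr M borel Y"
  shows "VaR M p (\<lambda>w. X' w + Y' w) \<le> VaR M p (\<lambda>w. X w + Y w)"
proof -
  obtain X0 Y0 where [measurable]: "X0 \<in> borel_measurable M" "Y0 \<in> borel_measurable M"
    and aeX0: "AE w in M. X0 w = X w" and aeY0: "AE w in M. Y0 w = Y w"
    and wc0: "wcomono_pts (P_pairs M p X0) X0 Y0"
    using wc unfolding weakly_comonotonic_P_def for_some_versions_def by blast
  obtain X1 Y1 where [measurable]: "X1 \<in> borel_measurable M" "Y1 \<in> borel_measurable M"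
    and aeX1: "AE w in M. X1 w = X w" and aeY1: "AE w in M. Y1 w = Y w"
    and wa1: "wantimono_pts (Q_pairs M p X1) X1 Y1"
    using wa unfolding weakly_antimonotonic_Q_def for_some_versions_def by blast
  define NX where "NX = distr M borel X"
  interpret NX: real_distribution NX unfolding NX_def by simp
  define a where "a = VaR M p X"
  have a0: "VaR M p X0 = a" unfolding a_def
    using VaR_qf[of X0] VaR_qf[of X] distr_AE_eq[OF _ _ aeX0] by simp
  have a1: "VaR M p X1 = a" unfolding a_def
    using VaR_qf[of X1] VaR_qf[of X] distr_AE_eq[OF _ _ aeX1] by simp
  define G where "G = {w \<in> space M. X0 w = X w \<and> Y0 w = Y w \<and> X1 w = X w \<and> Y1 w = Y w}"
  have G[measurable]: "G \<in> sets M" unfolding G_def by measurable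
  have aeG: "AE w in M. w \<in> G" using AE_space aeX0 aeY0 aeX1 aeY1 by eventually_elim (auto simp: G_def)
  have PG: "prob (G \<inter> C) = prob C" if "C \<in> sets M" for C
    using aeG that by (intro finite_measure_eq_AE) auto
  define A where "A = {w \<in> space M. a < X w}"
  have A[measurable]: "A \<in> sets M" unfolding A_def by measurable
  have PA: "prob A = 1 - p" unfolding A_def a_def using tail_prob(2)[OF _ cX p] by simp
  have comono: "Y w' \<le> Y w" if "w \<in> G" "w' \<in> G" "a < X w" "X w' \<le> a" for w w'
  proof -
    have "(w, w') \<in> P_pairs M p X0"
      using that a0 unfolding P_pairs_def tail_set_def G_def by auto
    then have "(X0 w - X0 w') * (Y0 w - Y0 w') \<ge> 0" using wc0 unfolding wcomono_pts_def by auto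
    moreover have "X0 w - X0 w' > 0" using that unfolding G_def by auto
    ultimately show ?thesis using that unfolding G_def by (simp add: zero_le_mult_iff)
  qed
  have anti: "(X w - X w') * (Y w - Y w') \<le> 0" if "w \<in> G" "w' \<in> G" "a < X w" "a < X w'" for w w'
  proof -
    have "(w, w') \<in> Q_pairs M p X1"
      using that a1 unfolding Q_pairs_def tail_set_def G_def by auto
    then have "(X1 w - X1 w') * (Y1 w - Y1 w') \<le> 0" using wa1 unfolding wantimono_pts_def by auto
    then show ?thesis using that unfolding G_def by simp
  qed
  define s where "s = VaR M p (\<lambda>w. X w + Y w)"
  define NS where "NS = distr M borel (\<lambda>w. X w + Y w)"
  have mS[measurable]: "(\<lambda>w. X w + Y w) \<in> borel_measurable M" by measurable
  interpret NS: real_distribution NS unfolding NS_def by simp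
  define NS' where "NS' = distr M borel (\<lambda>w. X' w + Y' w)"
  have mS'[measurable]: "(\<lambda>w. X' w + Y' w) \<in> borel_measurable M" by measurable
  interpret NS': real_distribution NS' unfolding NS'_def by simp
  have dW: "distr M borel (\<lambda>w. cdf NX (X w)) = Uni" unfolding NX_def by (rule distr_W[OF _ cX]) simp
  have mW[measurable]: "(\<lambda>w. cdf NX (X w)) \<in> borel_measurable M" using NX.cdf_measurable by measurable
  have PW: "prob {w \<in> space M. cdf NX (X w) = c} = 0" for c
  proof -
    have "prob {w \<in> space M. cdf NX (X w) = c} = measure Uni {c}"
      using prob_distr_eq[OF mW, of "{c}"] dW by simp
    also have "\<dots> = 0"
    proof -
      have "measure lborel ({0<..<1} \<inter> {c}) \<le> measure lborel {c::real}"
        by (intro measure_mono_fmeasurable) (auto intro!: fmeasurableI)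
      then show ?thesis using measure_Uni[of "{c}"] measure_nonneg[of lborel "{0<..<1} \<inter> {c}"] by simp
    qed
    finally show ?thesis .
  qed
  show ?thesis
  proof (rule field_le_epsilon)
    fix e :: real assume e: "0 < e"
    define \<epsilon> where "\<epsilon> = e / 2"
    have eps: "0 < \<epsilon>" using e by (simp add: \<epsilon>_def)
    define B where "B = {w \<in> space M. X w + Y w \<le> s + \<epsilon>}"
    have B[measurable]: "B \<in> sets M" unfolding B_def by measurable
    have PB: "prob B > p"
    proof -
      have "s = qf NS p" unfolding s_def NS_def by (rule VaR_qf) simp
      then have "p < cdf NS (s + \<epsilon>)" using NS.qf_less_cdf[OF p] eps by simp
      then show ?thesis unfolding B_def NS_def using cdf_distr_eq[OF mS] by simp
    qed
    define E0 where "E0 = G \<inter> (A \<inter> B)"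
    have E0[measurable]: "E0 \<in> sets M" unfolding E0_def by measurable
    have PE0: "prob E0 > 0"
    proof -
      have "prob (A - B) \<le> prob (space M - B)" by (intro finite_measure_mono) (auto simp: A_def)
      then have "prob (A - B) \<le> 1 - prob B" by (simp add: prob_compl)
      moreover have "prob (A - B) = prob A - prob (A \<inter> B)" by (rule finite_measure_Diff') auto
      ultimately have "prob (A \<inter> B) > 0" using PA PB by simp
      then show ?thesis unfolding E0_def using PG[of "A \<inter> B"] by simp
    qed
    define E where "E k = E0 \<inter> {w \<in> space M. of_int k * \<epsilon> \<le> Y w \<and> Y w < (of_int k + 1) * \<epsilon>}" for k :: int
    have E[measurable]: "E k \<in> sets M" for k unfolding E_def by measurable
    have "\<exists>k. prob (E k) > 0"
    proof (rule ccontr)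
      assume "\<not> ?thesis"
      then have "prob (E k) = 0" for k using measure_nonneg[of M "E k"] by (metis not_less order_antisym)
      then have "E k \<in> null_sets M" for k using prob_eq_0[OF E] AE_iff_null_sets[OF E] by blast
      then have "(\<Union>k\<in>UNIV. E k) \<in> null_sets M" by (intro null_sets_UN') auto
      moreover have "(\<Union>k\<in>UNIV. E k) = E0"
      proof
        show "(\<Union>k\<in>UNIV. E k) \<subseteq> E0" unfolding E_def by auto
        show "E0 \<subseteq> (\<Union>k\<in>UNIV. E k)"
        proof
          fix w assume w: "w \<in> E0"
          define k where "k = \<lfloor>Y w / \<epsilon>\<rfloor>"
          have "of_int k \<le> Y w / \<epsilon>" "Y w / \<epsilon> < of_int k + 1" unfolding k_def by linarith+
          then have "of_int k * \<epsilon> \<le> Y w" "Y w < (of_int k + 1) * \<epsilon>" using eps by (simp_all add: field_simps)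
          then have "w \<in> E k" using w unfolding E_def E0_def G_def by auto
          then show "w \<in> (\<Union>k\<in>UNIV. E k)" by auto
        qed
      qed
      ultimately have "E0 \<in> null_sets M" by simp
      then have "prob E0 = 0" using prob_eq_0[OF E0] AE_iff_null_sets[OF E0] by blast
      then show False using PE0 by simp
    qed
    then obtain k where Ek: "prob (E k) > 0" by blast
    have "\<exists>w1\<in>E k. \<exists>w2\<in>E k. cdf NX (X w1) < cdf NX (X w2)"
    proof (rule ccontr)
      assume nc: "\<not> ?thesis"
      have "E k \<noteq> {}" using Ek by auto
      then obtain w0 where w0: "w0 \<in> E k" by auto
      have "E k \<subseteq> {w \<in> space M. cdf NX (X w) = cdf NX (X w0)}"
      proof
        fix w assume "w \<in> E k"
        then show "w \<in> {w \<in> space M. cdf NX (X w) = cdf NX (X w0)}"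
          using nc w0 sets.sets_into_space[OF E] by (auto intro: order_antisym simp: not_less)
      qed
      moreover have "{w \<in> space M. cdf NX (X w) = cdf NX (X w0)} \<in> sets M" by measurable
      ultimately have "prob (E k) \<le> prob {w \<in> space M. cdf NX (X w) = cdf NX (X w0)}"
        by (rule finite_measure_mono)
      then have "prob (E k) \<le> 0" using PW[of "cdf NX (X w0)"] by simp
      then show False using Ek by simp
    qed
    then obtain w1 w2 where w1: "w1 \<in> E k" and w2: "w2 \<in> E k" and Wlt: "cdf NX (X w1) < cdf NX (X w2)"
      by blast
    have w1G: "w1 \<in> G" "a < X w1" "w1 \<in> space M" using w1 unfolding E_def E0_def A_def by auto
    have w2G: "w2 \<in> G" "a < X w2" "X w2 + Y w2 \<le> s + \<epsilon>" using w2 unfolding E_def E0_def A_def B_def by auto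
    have Xlt: "X w1 < X w2" using Wlt NX.cdf_nondecreasing[of "X w2" "X w1"] by (metis not_less)
    define x where "x = X w2"
    define y where "y = Y w1"
    have "Y w1 < Y w2 + \<epsilon>"
    proof -
      have "Y w1 < (of_int k + 1) * \<epsilon>" "of_int k * \<epsilon> \<le> Y w2" using w1 w2 unfolding E_def by auto
      then show ?thesis by (simp add: algebra_simps)
    qed
    then have xy: "x + y \<le> s + e" unfolding x_def y_def \<epsilon>_def using w2G(3) \<epsilon>_def by simp
    define T1 where "T1 = G \<inter> {w \<in> space M. x < X w}"
    define T2 where "T2 = G \<inter> {w \<in> space M. y < Y w}"
    define T3 where "T3 = G \<inter> {w \<in> space M. X w \<in> {X w1<..x}}"
    have T[measurable]: "T1 \<in> sets M" "T2 \<in> sets M" "T3 \<in> sets M" unfolding T1_def T2_def T3_def by measurable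
    have T2prop: "a < X w \<and> X w \<le> X w1" if "w \<in> T2" for w
    proof -
      have wG: "w \<in> G" and yw: "Y w1 < Y w" using that unfolding T2_def y_def by auto
      have "a < X w"
      proof (rule ccontr)
        assume "\<not> a < X w"
        then have "Y w \<le> Y w1" using comono[OF w1G(1) wG w1G(2)] by simp
        then show False using yw by simp
      qed
      moreover have "(X w - X w1) * (Y w - Y w1) \<le> 0" using anti[OF wG w1G(1) \<open>a < X w\<close> w1G(2)] .
      then have "X w \<le> X w1" using yw by (simp add: mult_le_0_iff)
      ultimately show ?thesis by simp
    qed
    have disj: "T1 \<inter> T2 = {}" "(T1 \<union> T2) \<inter> T3 = {}"
      using T2prop Xlt unfolding T1_def T3_def x_def by fastforce+
    have sub: "T1 \<union> T2 \<union> T3 \<subseteq> A"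
      using T2prop Xlt w2G(2) w1G(2) unfolding T1_def T3_def A_def x_def by (auto simp: T2_def)
    have "prob T1 + prob T2 + prob T3 = prob (T1 \<union> T2 \<union> T3)"
      using finite_measure_Union[OF _ _ disj(1)] finite_measure_Union[of "T1 \<union> T2" T3] disj(2) by simp
    also have "\<dots> \<le> prob A" using sub by (intro finite_measure_mono) auto
    finally have sum3: "prob T1 + prob T2 + prob T3 \<le> 1 - p" using PA by simp
    have "prob T3 = prob {w \<in> space M. X w \<in> {X w1<..x}}" unfolding T3_def by (rule PG) measurable
    also have "\<dots> = measure NX {X w1<..x}" unfolding NX_def by (rule prob_distr_eq[symmetric]) auto
    also have "\<dots> = cdf NX (X w2) - cdf NX (X w1)" unfolding x_def using NX.cdf_diff_eq[OF Xlt] by simp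
    finally have "prob T3 > 0" using Wlt by simp
    moreover have "prob T1 = prob {w \<in> space M. X w \<in> {x<..}}" unfolding T1_def by (simp add: PG)
    moreover have "prob T2 = prob {w \<in> space M. Y w \<in> {y<..}}" unfolding T2_def by (simp add: PG)
    ultimately have lt: "prob {w \<in> space M. X w \<in> {x<..}} + prob {w \<in> space M. Y w \<in> {y<..}} < 1 - p"
      using sum3 by simp
    have "prob {w \<in> space M. X' w \<in> {x<..}} = prob {w \<in> space M. X w \<in> {x<..}}"
      using prob_distr_eq[of X' "{x<..}"] prob_distr_eq[of X "{x<..}"] dX' by simp
    moreover have "prob {w \<in> space M. Y' w \<in> {y<..}} = prob {w \<in> space M. Y w \<in> {y<..}}"
      using prob_distr_eq[of Y' "{y<..}"] prob_distr_eq[of Y "{y<..}"] dY' by simp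
    moreover have "prob {w \<in> space M. s + e < X' w + Y' w} \<le>
        prob ({w \<in> space M. X' w \<in> {x<..}} \<union> {w \<in> space M. Y' w \<in> {y<..}})"
      using xy by (intro finite_measure_mono) auto
    moreover have "prob ({w \<in> space M. X' w \<in> {x<..}} \<union> {w \<in> space M. Y' w \<in> {y<..}}) \<le>
        prob {w \<in> space M. X' w \<in> {x<..}} + prob {w \<in> space M. Y' w \<in> {y<..}}"
      by (intro measure_Un_le) auto
    ultimately have "prob {w \<in> space M. s + e < X' w + Y' w} < 1 - p" using lt by linarith
    moreover have "{w \<in> space M. X' w + Y' w \<le> s + e} = space M - {w \<in> space M. s + e < X' w + Y' w}"
      by auto
    ultimately have "prob {w \<in> space M. X' w + Y' w \<le> s + e} > p" by (simp add: prob_compl)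
    then have "cdf NS' (s + e) > p" unfolding NS'_def using cdf_distr_eq[OF mS'] by simp
    then have "qf NS' p \<le> s + e" using NS'.qf_le p by simp
    then show "VaR M p (\<lambda>w. X' w + Y' w) \<le> VaR M p (\<lambda>w. X w + Y w) + e"
      unfolding s_def[symmetric] NS'_def using VaR_qf[OF mS'] by simp
  qed
qed

end

theorem theorem3p1:
  fixes M :: "'a measure" and X Y :: "'a \<Rightarrow> real" and p :: real
  assumes "prob_space M" and "atomless M"
    and "X \<in> borel_measurable M" and "Y \<in> borel_measurable M"
    and "integrable M X" and "integrable M Y"
    and "continuously_distributed M X" and "continuously_distributed M Y"
    and "0 < p" and "p < 1"
  shows "(weakly_comonotonic_P M p X Y \<and> weakly_antimonotonic_Q M p X Y \<longrightarrow>
           (\<forall>X' Y'. X' \<in> borel_measurable M \<and> Y' \<in> borel_measurable M \<and>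
              distr M borel X' = distr M borel X \<and> distr M borel Y' = distr M borel Y \<longrightarrow>
              VaR M p (\<lambda>w. X' w + Y' w) \<le> VaR M p (\<lambda>w. X w + Y w)))
       \<and> (weakly_comonotonic_P M p X Y \<longleftrightarrow>
           (\<forall>X' Y'. X' \<in> borel_measurable M \<and> Y' \<in> borel_measurable M \<and>
              distr M borel X' = distr M borel X \<and> distr M borel Y' = distr M borel Y \<longrightarrow>
              ES M p (\<lambda>w. X' w + Y' w) \<le> ES M p (\<lambda>w. X w + Y w)))"
proof -
  interpret prob_space M by fact
  note mX = assms(3) and mY = assms(4) and iX = assms(5) and iY = assms(6) and cX = assms(7)
    and p = assms(9,10)
  show ?thesis
  proof (intro conjI impI allI iffI)
    fix X' Y'
    assume "weakly_comonotonic_P M p X Y \<and> weakly_antimonotonic_Q M p X Y"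
      and "X' \<in> borel_measurable M \<and> Y' \<in> borel_measurable M \<and>
              distr M borel X' = distr M borel X \<and> distr M borel Y' = distr M borel Y"
    then show "VaR M p (\<lambda>w. X' w + Y' w) \<le> VaR M p (\<lambda>w. X w + Y w)"
      using part_i[OF mX mY cX p] by blast
  next
    fix X' Y'
    assume wc: "weakly_comonotonic_P M p X Y"
      and h: "X' \<in> borel_measurable M \<and> Y' \<in> borel_measurable M \<and>
              distr M borel X' = distr M borel X \<and> distr M borel Y' = distr M borel Y"
    then have [measurable]: "X' \<in> borel_measurable M" "Y' \<in> borel_measurable M"
      and dX: "distr M borel X' = distr M borel X" and dY: "distr M borel Y' = distr M borel Y" by auto
    have iX': "integrable M X'" by (rule int_same_distr[OF mX _ dX iX]) simp
    have iY': "integrable M Y'" by (rule int_same_distr[OF mY _ dY iY]) simp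
    have "ES M p (\<lambda>w. X' w + Y' w) \<le> ES M p X' + ES M p Y'"
      by (rule ES_sub[OF _ _ iX' iY' p]) auto
    also have "ES M p X' = ES M p X" using ES_qf[of X'] ES_qf[OF mX] dX by simp
    also have "ES M p Y' = ES M p Y" using ES_qf[of Y'] ES_qf[OF mY] dY by simp
    also have "ES M p X + ES M p Y \<le> ES M p (\<lambda>w. X w + Y w)"
      by (rule ii_forward[OF mX mY iX iY cX p wc])
    finally show "ES M p (\<lambda>w. X' w + Y' w) \<le> ES M p (\<lambda>w. X w + Y w)" .
  next
    assume h: "\<forall>X' Y'. X' \<in> borel_measurable M \<and> Y' \<in> borel_measurable M \<and>
              distr M borel X' = distr M borel X \<and> distr M borel Y' = distr M borel Y \<longrightarrow>
              ES M p (\<lambda>w. X' w + Y' w) \<le> ES M p (\<lambda>w. X w + Y w)"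
    obtain Y' where "Y' \<in> borel_measurable M" and dY: "distr M borel Y' = distr M borel Y"
      and le: "ES M p X + ES M p Y \<le> ES M p (\<lambda>w. X w + Y' w)"
      using coupling[OF mX mY iX iY cX p] by blast
    then have "ES M p (\<lambda>w. X w + Y' w) \<le> ES M p (\<lambda>w. X w + Y w)"
      using h mX by blast
    with le have "ES M p X + ES M p Y \<le> ES M p (\<lambda>w. X w + Y w)" by simp
    then show "weakly_comonotonic_P M p X Y"
      by (rule ii_backward[OF mX mY iX iY cX p])
  qed
qed

end
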